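(* Let $G$ be a graph such that the free category $\mathcal{F}_1(G)$ is a totally ordered set (regarded as a category). Then $\mathcal{F}_1(G)$ is isomorphic to one of the following: - a finite ordinal $\mathsf{0},\mathsf{1},\dots,\mathsf{n},\dots$; - one of the totally ordered sets $\mathbb{N}$, $\mathbb{N}^{\mathrm{op}}$ and $\mathbb{Z}$ with their usual orders.
   Context: A graph is a directed multigraph, consisting of objects, arrows, and domain and codomain maps. $\mathcal{F}_1(G)$ is the free category on $G$. Its objects are the vertices of $G$, its morphisms are the finite composable paths of arrows, and identities are the empty paths. A poset is regarded as a category with a unique morphism $x\to y$ exactly when $x\le y$. The finite ordinal $\mathsf{n}$ is the totally ordered set $0<1<\dots<n-1$; in particular $\mathsf{0}$ is empty. *)

theory Defs
  imports Main
begin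

record ('v, 'a) graph =
  gobj :: "'v set"
  garr :: "'a set"
  gdom :: "'a \<Rightarrow> 'v"
  gcod :: "'a \<Rightarrow> 'v"

definition wf_graph :: "('v, 'a) graph \<Rightarrow> bool" where
  "wf_graph G \<longleftrightarrow> (\<forall>e \<in> garr G. gdom G e \<in> gobj G \<and> gcod G e \<in> gobj G)"

text \<open>Morphisms of the free category F_1(G) from x to y: finite composable
paths of arrows (listed in order of traversal); the identity on x is the empty path.\<close>

fun is_path :: "('v, 'a) graph \<Rightarrow> 'v \<Rightarrow> 'a list \<Rightarrow> 'v \<Rightarrow> bool" where
  "is_path G x [] y \<longleftrightarrow> x \<in> gobj G \<and> x = y"
| "is_path G x (e # es) y \<longleftrightarrow> x \<in> gobj G \<and> e \<in> garr G \<and> gdom G e = x \<and> is_path G (gcod G e) es y"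

definition free_hom :: "('v, 'a) graph \<Rightarrow> 'v \<Rightarrow> 'v \<Rightarrow> 'a list set" where
  "free_hom G x y = {p. is_path G x p y}"

text \<open>A poset (P, le) as a category: a unique morphism x \<rightarrow> y exactly when le x y.
Hom-sets are modelled as {() | le x y}.\<close>

definition poset_hom :: "('b \<Rightarrow> 'b \<Rightarrow> bool) \<Rightarrow> 'b \<Rightarrow> 'b \<Rightarrow> unit set" where
  "poset_hom le x y = {u. le x y}"

text \<open>F_1(G) is isomorphic (as a category) to the poset category (P, le):
a bijection on objects together with bijections on all hom-sets. (Functoriality
is automatic since the target is thin.)\<close>

definition free_cat_iso_poset ::
  "('v, 'a) graph \<Rightarrow> 'b set \<Rightarrow> ('b \<Rightarrow> 'b \<Rightarrow> bool) \<Rightarrow> bool" where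
  "free_cat_iso_poset G P le \<longleftrightarrow>
     (\<exists>f. bij_betw f (gobj G) P \<and>
        (\<forall>x \<in> gobj G. \<forall>y \<in> gobj G.
           \<exists>h. bij_betw h (free_hom G x y) (poset_hom le (f x) (f y))))"

definition free_cat_is_total_order :: "('v, 'a) graph \<Rightarrow> bool" where
  "free_cat_is_total_order G \<longleftrightarrow>
     (\<exists>le. (\<forall>x \<in> gobj G. le x x)
         \<and> (\<forall>x \<in> gobj G. \<forall>y \<in> gobj G. \<forall>z \<in> gobj G. le x y \<longrightarrow> le y z \<longrightarrow> le x z)
         \<and> (\<forall>x \<in> gobj G. \<forall>y \<in> gobj G. le x y \<longrightarrow> le y x \<longrightarrow> x = y)
         \<and> (\<forall>x \<in> gobj G. \<forall>y \<in> gobj G. le x y \<or> le y x)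
         \<and> (\<forall>x \<in> gobj G. \<forall>y \<in> gobj G.
              \<exists>h. bij_betw h (free_hom G x y) (poset_hom le x y)))"

end

theory Submission
  imports Defs
begin

lemma is_path_start: "is_path G x p z \<Longrightarrow> x \<in> gobj G"
  by (cases p) auto

lemma is_path_append:
  "is_path G x (p @ q) y \<longleftrightarrow> (\<exists>z. is_path G x p z \<and> is_path G z q y)"
  by (induction p arbitrary: x) (auto dest: is_path_start)

lemma is_path_end:
  "is_path G x p z \<Longrightarrow> z \<in> insert x (gcod G ` set p)"
  by (induction p arbitrary: x) auto

lemma hom_unique:
  assumes "bij_betw h A (poset_hom le x y)" "p \<in> A" "q \<in> A"
  shows "p = q"
proof -
  have "inj_on h A" using assms(1) bij_betw_def by blast
  moreover have "h p = h q" by simp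
  ultimately show ?thesis using assms by (meson inj_onD)
qed

lemma hom_nonempty:
  assumes "bij_betw h A (poset_hom le x y)" "le x y"
  shows "\<exists>p. p \<in> A"
proof -
  have "() \<in> poset_hom le x y" using assms(2) by (simp add: poset_hom_def)
  moreover have "h ` A = poset_hom le x y" using bij_betw_imp_surj_on[OF assms(1)] .
  ultimately show ?thesis by blast
qed

lemma finite_intervals:
  assumes trans: "\<forall>x \<in> gobj G. \<forall>y \<in> gobj G. \<forall>z \<in> gobj G. le x y \<longrightarrow> le y z \<longrightarrow> le x z"
    and homs: "\<forall>x \<in> gobj G. \<forall>y \<in> gobj G. \<exists>h. bij_betw h (free_hom G x y) (poset_hom le x y)"
    and x: "x \<in> gobj G" and y: "y \<in> gobj G"
  shows "finite {z \<in> gobj G. le x z \<and> le z y}"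
proof (cases "le x y")
  case False
  then have "{z \<in> gobj G. le x z \<and> le z y} = {}" using trans x y by blast
  then show ?thesis by (metis finite.emptyI)
next
  case True
  obtain h where h: "bij_betw h (free_hom G x y) (poset_hom le x y)" using homs x y by blast
  obtain p where p: "p \<in> free_hom G x y" using hom_nonempty[OF h True] by blast
  have "{z \<in> gobj G. le x z \<and> le z y} \<subseteq> insert x (gcod G ` set p)"
  proof
    fix z assume z: "z \<in> {z \<in> gobj G. le x z \<and> le z y}"
    obtain h1 where h1: "bij_betw h1 (free_hom G x z) (poset_hom le x z)" using homs x z by blast
    obtain h2 where h2: "bij_betw h2 (free_hom G z y) (poset_hom le z y)" using homs y z by blast
    obtain p1 where p1: "p1 \<in> free_hom G x z" using hom_nonempty[OF h1] z by blast
    obtain p2 where p2: "p2 \<in> free_hom G z y" using hom_nonempty[OF h2] z by blast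
    have "p1 @ p2 \<in> free_hom G x y" using p1 p2 by (auto simp: free_hom_def is_path_append)
    then have "p1 @ p2 = p" using hom_unique[OF h] p by blast
    then show "z \<in> insert x (gcod G ` set p)"
      using is_path_end[of G x p1 z] p1 by (auto simp: free_hom_def)
  qed
  then show ?thesis by (meson finite.insertI finite_imageI finite_set finite_subset)
qed

locale tord =
  fixes V :: "'v set" and le :: "'v \<Rightarrow> 'v \<Rightarrow> bool"
  assumes refl: "x \<in> V \<Longrightarrow> le x x"
    and trans: "x \<in> V \<Longrightarrow> y \<in> V \<Longrightarrow> z \<in> V \<Longrightarrow> le x y \<Longrightarrow> le y z \<Longrightarrow> le x z"
    and antisym: "x \<in> V \<Longrightarrow> y \<in> V \<Longrightarrow> le x y \<Longrightarrow> le y x \<Longrightarrow> x = y"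
    and total: "x \<in> V \<Longrightarrow> y \<in> V \<Longrightarrow> le x y \<or> le y x"
    and fin: "x \<in> V \<Longrightarrow> y \<in> V \<Longrightarrow> finite {z \<in> V. le x z \<and> le z y}"
begin

definition U where "U a z = {w \<in> V. le a w \<and> le w z}"
definition D where "D a z = {w \<in> V. le z w \<and> le w a}"
definition r where "r a z = (if le a z then int (card (U a z)) else 2 - int (card (D a z)))"

lemma finU: "a \<in> V \<Longrightarrow> z \<in> V \<Longrightarrow> finite (U a z)"
  using fin unfolding U_def by blast

lemma finD: "a \<in> V \<Longrightarrow> z \<in> V \<Longrightarrow> finite (D a z)"
  using fin unfolding D_def by blast

lemma r_pos:
  assumes "a \<in> V" "z \<in> V" "le a z"
  shows "r a z \<ge> 1"
proof -
  have "a \<in> U a z" using assms refl unfolding U_def by blast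
  then have "card (U a z) \<ge> 1" using finU[OF assms(1,2)]
    by (metis One_nat_def Suc_leI card_gt_0_iff empty_iff)
  then show ?thesis using assms(3) unfolding r_def by simp
qed

lemma r_neg:
  assumes "a \<in> V" "z \<in> V" "\<not> le a z"
  shows "r a z \<le> 0"
proof -
  have "le z a" using total assms by blast
  then have "{z, a} \<subseteq> D a z" using assms refl unfolding D_def by blast
  moreover have "z \<noteq> a" using assms refl by blast
  ultimately have "card (D a z) \<ge> 2" using finD[OF assms(1,2)]
    by (metis card_2_iff card_mono)
  then show ?thesis using assms(3) unfolding r_def by simp
qed

lemma r_strict:
  assumes a: "a \<in> V" and x: "x \<in> V" and y: "y \<in> V" and xy: "le x y" "x \<noteq> y"
  shows "r a x < r a y"
proof (cases "le a x")
  case True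
  then have ay: "le a y" using trans a x y xy by blast
  have "U a x \<subseteq> U a y" using trans a x y xy unfolding U_def by blast
  moreover have "y \<in> U a y" "y \<notin> U a x" using ay y refl antisym x xy unfolding U_def by auto
  ultimately have "U a x \<subset> U a y" by blast
  then have "card (U a x) < card (U a y)" using finU[OF a y] psubset_card_mono by blast
  then show ?thesis using True ay unfolding r_def by simp
next
  case False
  note nx = False
  show ?thesis
  proof (cases "le a y")
    case True
    then show ?thesis using r_pos[OF a y True] r_neg[OF a x nx] by simp
  next
    case False
    have "D a y \<subseteq> D a x" using trans a x y xy unfolding D_def by blast
    moreover have "le x a" using total a x nx by blast
    then have "x \<in> D a x" "x \<notin> D a y" using x refl antisym y xy unfolding D_def by auto
    ultimately have "D a y \<subset> D a x" by blast
    then have "card (D a y) < card (D a x)" using finD[OF a x] psubset_card_mono by blast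
    then show ?thesis using False nx unfolding r_def by simp
  qed
qed

lemma r_iff:
  assumes a: "a \<in> V" and x: "x \<in> V" and y: "y \<in> V"
  shows "le x y \<longleftrightarrow> r a x \<le> r a y"
proof
  assume "le x y" then show "r a x \<le> r a y"
    using r_strict[OF a x y] by (cases "x = y") auto
next
  assume h: "r a x \<le> r a y"
  show "le x y"
  proof (rule ccontr)
    assume "\<not> le x y"
    then have "le y x" "y \<noteq> x" using total x y refl by blast+
    then show False using r_strict[OF a y x] h by simp
  qed
qed

lemma r_inj: assumes "a \<in> V" shows "inj_on (r a) V"
proof (rule inj_onI)
  fix x y assume "x \<in> V" "y \<in> V" "r a x = r a y"
  then show "x = y" using r_iff[OF assms, of x y] r_iff[OF assms, of y x] antisym[of x y] by simp
qed

lemma r_a: "a \<in> V \<Longrightarrow> r a a = 1"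
proof -
  assume a: "a \<in> V"
  have "U a a = {a}" using a refl antisym unfolding U_def by blast
  then show ?thesis using a refl unfolding r_def by simp
qed

lemma U_img:
  assumes a: "a \<in> V" and z: "z \<in> V" and az: "le a z"
  shows "r a ` U a z = {1..r a z}"
proof (rule card_subset_eq)
  show "finite {1..r a z}" by simp
  show "r a ` U a z \<subseteq> {1..r a z}"
  proof
    fix v assume "v \<in> r a ` U a z"
    then obtain w where w: "w \<in> V" "le a w" "le w z" "v = r a w" unfolding U_def by blast
    then show "v \<in> {1..r a z}" using r_pos[OF a w(1,2)] r_iff[OF a w(1) z] by simp
  qed
  have "card (r a ` U a z) = card (U a z)"
    by (rule card_image, rule inj_on_subset[OF r_inj[OF a]], auto simp: U_def)
  then show "card (r a ` U a z) = card {1..r a z}" using az unfolding r_def by simp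
qed

lemma D_img:
  assumes a: "a \<in> V" and z: "z \<in> V" and az: "\<not> le a z"
  shows "r a ` D a z = {r a z..1}"
proof (rule card_subset_eq)
  show "finite {r a z..1}" by simp
  show "r a ` D a z \<subseteq> {r a z..1}"
  proof
    fix v assume "v \<in> r a ` D a z"
    then obtain w where w: "w \<in> V" "le z w" "le w a" "v = r a w" unfolding D_def by blast
    then show "v \<in> {r a z..1}" using r_iff[OF a w(1) a] r_iff[OF a z w(1)] r_a[OF a] by simp
  qed
  have "card (r a ` D a z) = card (D a z)"
    by (rule card_image, rule inj_on_subset[OF r_inj[OF a]], auto simp: D_def)
  then show "card (r a ` D a z) = card {r a z..1}" using az unfolding r_def by simp
qed

lemma convex:
  assumes a: "a \<in> V" and x: "x \<in> V" and y: "y \<in> V" and j: "r a x \<le> j" "j \<le> r a y"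
  shows "j \<in> r a ` V"
proof (cases "j \<ge> 1")
  case True
  then have ay: "le a y" using r_neg[OF a y] j by force
  then have "j \<in> r a ` U a y" using U_img[OF a y ay] True j by simp
  then show ?thesis unfolding U_def by blast
next
  case False
  then have ax: "\<not> le a x" using r_pos[OF a x] j by force
  then have "j \<in> r a ` D a x" using D_img[OF a x ax] False j by simp
  then show ?thesis unfolding D_def by blast
qed

end


lemma int_up:
  fixes I :: "int set"
  assumes conv: "\<forall>x\<in>I. \<forall>y\<in>I. \<forall>j. x \<le> j \<longrightarrow> j \<le> y \<longrightarrow> j \<in> I"
    and x0: "x0 \<in> I" and nh: "\<forall>x\<in>I. \<exists>y\<in>I. x < y"
  shows "x0 + int n \<in> I"
proof (induction n)
  case 0 then show ?case using x0 by simp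
next
  case (Suc n)
  then obtain y where y: "y \<in> I" "x0 + int n < y" using nh by blast
  have "x0 + int n \<le> x0 + int (Suc n)" "x0 + int (Suc n) \<le> y" using y by auto
  then show ?case using conv[rule_format, OF Suc y(1)] by blast
qed

lemma int_down:
  fixes I :: "int set"
  assumes conv: "\<forall>x\<in>I. \<forall>y\<in>I. \<forall>j. x \<le> j \<longrightarrow> j \<le> y \<longrightarrow> j \<in> I"
    and x0: "x0 \<in> I" and nl: "\<forall>x\<in>I. \<exists>y\<in>I. y < x"
  shows "x0 - int n \<in> I"
proof (induction n)
  case 0 then show ?case using x0 by simp
next
  case (Suc n)
  then obtain y where y: "y \<in> I" "y < x0 - int n" using nl by blast
  have "y \<le> x0 - int (Suc n)" "x0 - int (Suc n) \<le> x0 - int n" using y by auto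
  then show ?case using conv[rule_format, OF y(1) Suc] by blast
qed

lemma int_conv_cases:
  fixes I :: "int set"
  assumes conv: "\<forall>x\<in>I. \<forall>y\<in>I. \<forall>j. x \<le> j \<longrightarrow> j \<le> y \<longrightarrow> j \<in> I"
    and ne: "I \<noteq> {}"
  shows "(\<exists>lo hi. I = {lo..hi}) \<or> (\<exists>lo. I = {lo..}) \<or> (\<exists>hi. I = {..hi}) \<or> I = UNIV"
proof -
  obtain x0 where x0: "x0 \<in> I" using ne by blast
  show ?thesis
  proof (cases "\<exists>lo\<in>I. \<forall>x\<in>I. lo \<le> x")
    case True
    then obtain lo where lo: "lo \<in> I" "\<forall>x\<in>I. lo \<le> x" by blast
    show ?thesis
    proof (cases "\<exists>hi\<in>I. \<forall>x\<in>I. x \<le> hi")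
      case True
      then obtain hi where hi: "hi \<in> I" "\<forall>x\<in>I. x \<le> hi" by blast
      have "I = {lo..hi}"
      proof
        show "I \<subseteq> {lo..hi}" using lo hi by auto
        show "{lo..hi} \<subseteq> I"
        proof
          fix k assume "k \<in> {lo..hi}"
          then show "k \<in> I" using conv lo(1) hi(1) by (meson atLeastAtMost_iff)
        qed
      qed
      then show ?thesis by blast
    next
      case False
      then have nh: "\<forall>x\<in>I. \<exists>y\<in>I. x < y" by (meson not_le)
      have "I = {lo..}"
      proof
        show "I \<subseteq> {lo..}" using lo by auto
        show "{lo..} \<subseteq> I"
        proof
          fix k assume "k \<in> {lo..}"
          then have "k = lo + int (nat (k - lo))" by simp
          then show "k \<in> I" using int_up[OF conv lo(1) nh, of "nat (k - lo)"] by metis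
        qed
      qed
      then show ?thesis by blast
    qed
  next
    case False
    then have nl: "\<forall>x\<in>I. \<exists>y\<in>I. y < x" by (meson not_le)
    show ?thesis
    proof (cases "\<exists>hi\<in>I. \<forall>x\<in>I. x \<le> hi")
      case True
      then obtain hi where hi: "hi \<in> I" "\<forall>x\<in>I. x \<le> hi" by blast
      have "I = {..hi}"
      proof
        show "I \<subseteq> {..hi}" using hi by auto
        show "{..hi} \<subseteq> I"
        proof
          fix k assume "k \<in> {..hi}"
          then have "k = hi - int (nat (hi - k))" by simp
          then show "k \<in> I" using int_down[OF conv hi(1) nl, of "nat (hi - k)"] by metis
        qed
      qed
      then show ?thesis by blast
    next
      case False
      then have nh: "\<forall>x\<in>I. \<exists>y\<in>I. x < y" by (meson not_le)
      have "I = UNIV"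
      proof (intro set_eqI iffI)
        fix k :: int
        show "k \<in> I"
        proof (cases "x0 \<le> k")
          case True
          then have "k = x0 + int (nat (k - x0))" by simp
          then show ?thesis using int_up[OF conv x0 nh, of "nat (k - x0)"] by metis
        next
          case False
          then have "k = x0 - int (nat (x0 - k))" by simp
          then show ?thesis using int_down[OF conv x0 nl, of "nat (x0 - k)"] by metis
        qed
      qed simp
      then show ?thesis by blast
    qed
  qed
qed

lemma nat_sub_le: "lo \<le> u \<Longrightarrow> lo \<le> (v::int) \<Longrightarrow> nat (u - lo) \<le> nat (v - lo) \<longleftrightarrow> u \<le> v"
  by arith

lemma nat_sub_ge: "u \<le> hi \<Longrightarrow> (v::int) \<le> hi \<Longrightarrow> nat (hi - u) \<ge> nat (hi - v) \<longleftrightarrow> u \<le> v"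
  by arith

lemma transfer_iso:
  assumes homs: "\<forall>x \<in> gobj G. \<forall>y \<in> gobj G. \<exists>h. bij_betw h (free_hom G x y) (poset_hom le x y)"
    and bij: "bij_betw f (gobj G) P"
    and ord: "\<forall>x \<in> gobj G. \<forall>y \<in> gobj G. le x y \<longleftrightarrow> le' (f x) (f y)"
  shows "free_cat_iso_poset G P le'"
proof -
  have "\<forall>x \<in> gobj G. \<forall>y \<in> gobj G. poset_hom le x y = poset_hom le' (f x) (f y)"
    using ord by (simp add: poset_hom_def)
  then show ?thesis unfolding free_cat_iso_poset_def using bij homs by metis
qed

theorem mainTheorem6:
  fixes G :: "('v, 'a) graph"
  assumes "wf_graph G"
    and "free_cat_is_total_order G"
  shows "(\<exists>n::nat. free_cat_iso_poset G {0..<n} (\<le>))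
       \<or> free_cat_iso_poset G (UNIV :: nat set) (\<le>)
       \<or> free_cat_iso_poset G (UNIV :: nat set) (\<ge>)
       \<or> free_cat_iso_poset G (UNIV :: int set) (\<le>)"
proof -
  obtain le where rf: "\<forall>x \<in> gobj G. le x x"
    and tr: "\<forall>x \<in> gobj G. \<forall>y \<in> gobj G. \<forall>z \<in> gobj G. le x y \<longrightarrow> le y z \<longrightarrow> le x z"
    and an: "\<forall>x \<in> gobj G. \<forall>y \<in> gobj G. le x y \<longrightarrow> le y x \<longrightarrow> x = y"
    and to: "\<forall>x \<in> gobj G. \<forall>y \<in> gobj G. le x y \<or> le y x"
    and homs: "\<forall>x \<in> gobj G. \<forall>y \<in> gobj G. \<exists>h. bij_betw h (free_hom G x y) (poset_hom le x y)"
    using assms(2) unfolding free_cat_is_total_order_def by blast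
  define V where "V = gobj G"
  show ?thesis
  proof (cases "V = {}")
    case True
    have "free_cat_iso_poset G {0..<(0::nat)} (\<le>)"
      using True unfolding V_def free_cat_iso_poset_def by (simp add: bij_betw_def)
    then show ?thesis by blast
  next
    case False
    then obtain a where a: "a \<in> V" by blast
    interpret tord V le
      apply unfold_locales
      using rf tr an to finite_intervals[OF tr homs] unfolding V_def by blast+
    define I where "I = r a ` V"
    have rbij: "bij_betw (r a) V I" unfolding I_def using r_inj[OF a] by (simp add: bij_betw_def)
    have conv: "\<forall>x\<in>I. \<forall>y\<in>I. \<forall>j. x \<le> j \<longrightarrow> j \<le> y \<longrightarrow> j \<in> I"
    proof (intro ballI allI impI)
      fix x y j assume xy: "x \<in> I" "y \<in> I" "x \<le> j" "j \<le> y"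
      then obtain x' y' where "x' \<in> V" "y' \<in> V" "x = r a x'" "y = r a y'" unfolding I_def by blast
      then show "j \<in> I" using convex[OF a, of x' y' j] xy(3,4) unfolding I_def by simp
    qed
    have ne: "I \<noteq> {}" using a unfolding I_def by blast
    have rI: "\<And>x. x \<in> V \<Longrightarrow> r a x \<in> I" unfolding I_def by blast
    have ordr: "\<forall>x\<in>V. \<forall>y\<in>V. le x y \<longleftrightarrow> r a x \<le> r a y" using r_iff[OF a] by blast
    have homs': "\<forall>x \<in> gobj G. \<forall>y \<in> gobj G. \<exists>h. bij_betw h (free_hom G x y) (poset_hom le x y)"
      using homs .
    have disj: "(\<exists>lo hi. I = {lo..hi}) \<or> (\<exists>lo. I = {lo..}) \<or> (\<exists>hi. I = {..hi}) \<or> I = UNIV"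
      by (rule int_conv_cases[OF conv ne])
    from disj show ?thesis
    proof (elim disjE exE)
      fix lo hi assume Ieq: "I = {lo..hi}"
      define g where "g = (\<lambda>x::int. nat (x - lo))"
      have gb: "bij_betw g I {0..<nat (hi - lo + 1)}"
        unfolding Ieq g_def
        by (rule bij_betw_byWitness[where f' = "\<lambda>k. int k + lo"]) auto
      have "bij_betw (g \<circ> r a) V {0..<nat (hi - lo + 1)}" using bij_betw_trans[OF rbij gb] .
      moreover have "\<forall>x\<in>V. \<forall>y\<in>V. le x y \<longleftrightarrow> (g \<circ> r a) x \<le> (g \<circ> r a) y"
      proof (intro ballI)
        fix x y assume xy: "x \<in> V" "y \<in> V"
        then have "r a x \<in> {lo..hi}" "r a y \<in> {lo..hi}" using rI Ieq by auto
        then show "le x y \<longleftrightarrow> (g \<circ> r a) x \<le> (g \<circ> r a) y"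
          using ordr xy nat_sub_le[of _ "r a x" "r a y"] unfolding g_def by simp
      qed
      ultimately have "free_cat_iso_poset G {0..<nat (hi - lo + 1)} (\<le>)"
        unfolding V_def by (rule transfer_iso[OF homs'])
      then show ?thesis by blast
    next
      fix lo assume Ieq: "I = {lo..}"
      define g where "g = (\<lambda>x::int. nat (x - lo))"
      have gb: "bij_betw g I (UNIV :: nat set)"
        unfolding Ieq g_def
        by (rule bij_betw_byWitness[where f' = "\<lambda>k. int k + lo"]) auto
      have "bij_betw (g \<circ> r a) V UNIV" using bij_betw_trans[OF rbij gb] .
      moreover have "\<forall>x\<in>V. \<forall>y\<in>V. le x y \<longleftrightarrow> (g \<circ> r a) x \<le> (g \<circ> r a) y"
      proof (intro ballI)
        fix x y assume xy: "x \<in> V" "y \<in> V"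
        then have "r a x \<in> {lo..}" "r a y \<in> {lo..}" using rI Ieq by auto
        then show "le x y \<longleftrightarrow> (g \<circ> r a) x \<le> (g \<circ> r a) y"
          using ordr xy nat_sub_le[of _ "r a x" "r a y"] unfolding g_def by simp
      qed
      ultimately have "free_cat_iso_poset G (UNIV :: nat set) (\<le>)"
        unfolding V_def by (rule transfer_iso[OF homs'])
      then show ?thesis by blast
    next
      fix hi assume Ieq: "I = {..hi}"
      define g where "g = (\<lambda>x::int. nat (hi - x))"
      have gb: "bij_betw g I (UNIV :: nat set)"
        unfolding Ieq g_def
        by (rule bij_betw_byWitness[where f' = "\<lambda>k. hi - int k"]) auto
      have "bij_betw (g \<circ> r a) V UNIV" using bij_betw_trans[OF rbij gb] .
      moreover have "\<forall>x\<in>V. \<forall>y\<in>V. le x y \<longleftrightarrow> (g \<circ> r a) x \<ge> (g \<circ> r a) y"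
      proof (intro ballI)
        fix x y assume xy: "x \<in> V" "y \<in> V"
        then have "r a x \<in> {..hi}" "r a y \<in> {..hi}" using rI Ieq by auto
        then show "le x y \<longleftrightarrow> (g \<circ> r a) x \<ge> (g \<circ> r a) y"
          using ordr xy nat_sub_ge[of "r a x" hi "r a y"] unfolding g_def by simp
      qed
      ultimately have "free_cat_iso_poset G (UNIV :: nat set) (\<ge>)"
        unfolding V_def by (rule transfer_iso[OF homs'])
      then show ?thesis by blast
    next
      assume Ieq: "I = UNIV"
      have "bij_betw (r a) V UNIV" using rbij Ieq by simp
      then have "free_cat_iso_poset G (UNIV :: int set) (\<le>)"
        using ordr unfolding V_def by (rule transfer_iso[OF homs'])
      then show ?thesis by blast
    qed
  qed
qed

end
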